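(* As $N\to\infty$, $$\sum_{k=1}^{N}\varphi(k)\,I_N\!\left(\frac{1}{k}\right)=\frac{N^3}{6\zeta(3)}+O\!\left(\frac{N^3}{\log N}\right),$$ i.e. there is a constant $C$ such that for all integers $N\ge 2$, $\left|\sum_{k=1}^{N}\varphi(k)I_N(1/k)-\frac{N^3}{6\zeta(3)}\right|\le C\,\frac{N^3}{\log N}$.
   Context: $\varphi$ is Euler's totient function and $\zeta$ is the Riemann zeta function. For a positive integer $N$, the Farey sequence of order $N$, $F_N$, is the increasing list of all reduced fractions $h/k$ with $0\le h\le k\le N$ and $\gcd(h,k)=1$; it begins with $0/1$ and ends with $1/1$. For $x\in F_N$, $I_N(x)$ denotes the position of $x$ in $F_N$, indexed starting from $1$ (so $I_N(0/1)=1$ and $I_N(1/1)=|F_N|$). *)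

theory Defs
  imports "HOL-Analysis.Analysis" "HOL-Number_Theory.Number_Theory"
begin

text \<open>Farey sequence of order N, as the set of rationals h/k in [0,1] whose
reduced denominator k is at most N (Rat.quotient_of gives the reduced form).\<close>
definition farey :: "nat \<Rightarrow> rat set" where
  "farey N = {x. 0 \<le> x \<and> x \<le> 1 \<and> snd (quotient_of x) \<le> int N}"

text \<open>Position of x in the increasing list F_N, indexed from 1.\<close>
definition farey_index :: "nat \<Rightarrow> rat \<Rightarrow> nat" where
  "farey_index N x = card {y \<in> farey N. y < x} + 1"

definition zeta_real :: "real \<Rightarrow> real" where
  "zeta_real s = (\<Sum>n. 1 / (real (Suc n)) powr s)"

end

theory Submission
  imports Defs
begin

definition PP :: "nat \<Rightarrow> nat \<Rightarrow> (nat \<times> nat) set" where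
  "PP M k = {(h,q). 1 \<le> h \<and> h < q \<and> h*k < q \<and> q \<le> M \<and> coprime h q}"

definition fr :: "nat \<times> nat \<Rightarrow> rat" where
  "fr p = of_nat (fst p) / of_nat (snd p)"

lemma qo:
  assumes "coprime h q" "q > 0"
  shows "quotient_of (of_nat h / of_nat q :: rat) = (int h, int q)"
proof -
  have "(of_nat h / of_nat q :: rat) = Fract (int h) (int q)"
    by (simp add: Fract_of_int_quotient)
  moreover have "coprime (int h) (int q)" using assms by simp
  ultimately show ?thesis using assms by (simp add: quotient_of_Fract)
qed

lemma PP_finite: "finite (PP M k)"
  by (rule finite_subset[of _ "{0..M} \<times> {0..M}"]) (auto simp: PP_def)

lemma farey_card:
  assumes k: "1 \<le> k" and N1: "1 \<le> N"
  shows "card {y \<in> farey N. y < 1 / of_nat k} = card (PP N k) + 1"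
proof -
  have inj: "inj_on fr (PP N k)"
  proof (rule inj_onI)
    fix a b assume a: "a \<in> PP N k" and b: "b \<in> PP N k" and e: "fr a = fr b"
    obtain h q where ha: "a = (h,q)" by (cases a)
    obtain h' q' where hb: "b = (h',q')" by (cases b)
    have c1: "coprime h q" "q > 0" using a ha by (auto simp: PP_def)
    have c2: "coprime h' q'" "q' > 0" using b hb by (auto simp: PP_def)
    have "fr a = of_nat h / of_nat q" unfolding ha fr_def by simp
    hence 1: "quotient_of (fr a) = (int h, int q)" using qo[OF c1] by simp
    have "fr b = of_nat h' / of_nat q'" unfolding hb fr_def by simp
    hence 2: "quotient_of (fr b) = (int h', int q')" using qo[OF c2] by simp
    have "(int h, int q) = (int h', int q')" using 1 2 e by metis
    thus "a = b" using ha hb by simp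
  qed
  have z: "0 \<notin> fr ` PP N k"
    by (auto simp: PP_def fr_def)
  have eq: "{y \<in> farey N. y < 1 / of_nat k} = insert 0 (fr ` PP N k)"
  proof (intro equalityI subsetI)
    fix y assume y: "y \<in> {y \<in> farey N. y < 1 / of_nat k}"
    show "y \<in> insert 0 (fr ` PP N k)"
    proof (cases "y = 0")
      case False
      obtain a b where qy: "quotient_of y = (a,b)" by (cases "quotient_of y")
      have b0: "b > 0" using qy by (rule quotient_of_denom_pos)
      have cop: "coprime a b" using qy by (rule quotient_of_coprime)
      have yd: "y = of_int a / of_int b" using qy by (rule quotient_of_div)
      have y0: "y > 0" using y False by (auto simp: farey_def)
      have a0: "a > 0" using y0 b0 yd by (simp add: zero_less_divide_iff)
      have bN: "b \<le> int N" using y qy by (auto simp: farey_def)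
      have "of_int a / of_int b < (1 / of_nat k :: rat)" using y yd by simp
      hence "of_int a * of_nat k < (of_int b :: rat)" using b0 k
        by (simp add: divide_simps)
      hence lt: "a * int k < b"
        by (metis of_int_less_iff of_int_mult of_int_of_nat_eq)
      have "a \<le> a * int k" using k a0 by simp
      hence ab: "a < b" using lt by linarith
      have "(nat a, nat b) \<in> PP N k"
      proof -
        have "nat a * k < nat b" using lt a0 proof -
          have "int (nat a * k) = a * int k" using a0 by simp
          thus ?thesis using lt by linarith
        qed
        moreover have "nat a < nat b" using ab a0 by simp
        moreover have "nat b \<le> N" using bN by simp
        moreover have "1 \<le> nat a" using a0 by simp
        moreover have "coprime (nat a) (nat b)" using cop a0 b0
          using coprime_int_iff[of "nat a" "nat b"] by simp
        ultimately show ?thesis unfolding PP_def by simp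
      qed
      moreover have "fr (nat a, nat b) = y" using yd a0 b0 by (simp add: fr_def)
      ultimately show ?thesis by blast
    qed simp
  next
    fix y assume y: "y \<in> insert 0 (fr ` PP N k)"
    show "y \<in> {y \<in> farey N. y < 1 / of_nat k}"
    proof (cases "y = 0")
      case True
      thus ?thesis using k N1 by (simp add: farey_def)
    next
      case False
      then obtain h q where hq: "(h,q) \<in> PP N k" and yv: "y = fr (h,q)" using y by auto
      have h1: "1 \<le> h" and hk: "h*k < q" and qN: "q \<le> N" and c: "coprime h q"
        using hq by (auto simp: PP_def)
      have q0: "q > 0" using hk by simp
      have "h \<le> h * k" using k by simp
      hence hq': "h < q" using hk by linarith
      have qq: "quotient_of y = (int h, int q)" using yv qo[OF c q0] by (simp add: fr_def)
      have "y \<le> 1" using yv hq' by (simp add: fr_def)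
      moreover have "y \<ge> 0" using yv by (simp add: fr_def)
      moreover have "y < 1 / of_nat k"
      proof -
        have "(of_nat h * of_nat k :: rat) < of_nat q" using hk by (metis of_nat_less_iff of_nat_mult)
        hence "(of_nat h / of_nat q) * of_nat k < (1::rat)" using q0 by (simp add: divide_simps)
        hence yk: "y * of_nat k < 1" using yv by (simp add: fr_def)
        have "(0::rat) < of_nat k" using k by simp
        thus ?thesis using yk by (simp add: pos_less_divide_eq)
      qed
      ultimately show ?thesis using qq qN by (simp add: farey_def)
    qed
  qed
  show ?thesis unfolding eq using z inj PP_finite
    by (simp add: card_image)
qed


definition QQ :: "nat \<Rightarrow> nat \<Rightarrow> (nat \<times> nat) set" where
  "QQ M k = {(h,q). 1 \<le> h \<and> h*k < q \<and> q \<le> M}"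

lemma scale:
  assumes k: "1 \<le> k"
  shows "card (QQ N k) = (\<Sum>e=1..N. card (PP (N div e) k))"
proof -
  define f where "f = (\<lambda>(e::nat,(h::nat,q::nat)). (e*h, e*q))"
  define S where "S = Sigma {1..N} (\<lambda>e. PP (N div e) k)"
  have bij: "bij_betw f S (QQ N k)"
    unfolding bij_betw_def
  proof (intro conjI)
    show "inj_on f S"
    proof (rule inj_onI)
      fix x y assume x: "x \<in> S" and y: "y \<in> S" and fe: "f x = f y"
      obtain e h q where xe: "x = (e,(h,q))" by (cases x) auto
      obtain e' h' q' where ye: "y = (e',(h',q'))" by (cases y) auto
      have c: "coprime h q" "e \<ge> 1" using x xe by (auto simp: S_def PP_def)
      have c': "coprime h' q'" "e' \<ge> 1" using y ye by (auto simp: S_def PP_def)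
      have eq1: "e*h = e'*h'" and eq2: "e*q = e'*q'" using fe xe ye by (auto simp: f_def)
      have "gcd (e*h) (e*q) = e" using c gcd_mult_distrib_nat[of e h q] by simp
      moreover have "gcd (e'*h') (e'*q') = e'" using c' gcd_mult_distrib_nat[of e' h' q'] by simp
      ultimately have ee: "e = e'" using eq1 eq2 by simp
      have "h = h'" using eq1 ee c(2) by simp
      moreover have "q = q'" using eq2 ee c(2) by simp
      ultimately show "x = y" using xe ye ee by simp
    qed
  next
    show "f ` S = QQ N k"
    proof (intro equalityI subsetI)
      fix z assume "z \<in> f ` S"
      then obtain e h q where m: "(e,(h,q)) \<in> S" and z: "z = (e*h, e*q)" by (auto simp: f_def)
      have e1: "1 \<le> e" and h1: "1 \<le> h" and hk: "h*k < q" and qN: "q \<le> N div e"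
        using m by (auto simp: S_def PP_def)
      have "e*h \<ge> 1" using e1 h1 by simp
      moreover have "(e*h)*k < e*q" using hk e1 by (simp add: mult.assoc)
      moreover have "e*q \<le> N" using qN e1 less_eq_div_iff_mult_less_eq[of e q N] by (simp add: mult.commute)
      ultimately show "z \<in> QQ N k" using z by (simp add: QQ_def)
    next
      fix z assume zq: "z \<in> QQ N k"
      obtain h q where z: "z = (h,q)" by (cases z)
      have h1: "1 \<le> h" and hk: "h*k < q" and qN: "q \<le> N" using zq z by (auto simp: QQ_def)
      define g where "g = gcd h q"
      have g0: "g > 0" using h1 by (simp add: g_def)
      have hg: "h = g * (h div g)" by (simp add: g_def)
      have qg: "q = g * (q div g)" by (simp add: g_def)
      have cop: "coprime (h div g) (q div g)" using h1 div_gcd_coprime[of h q] by (simp add: g_def)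
      have "g \<le> q" using hk unfolding g_def by (intro gcd_le2_nat) simp
      hence gN: "g \<in> {1..N}" using g0 qN by simp
      have a1: "1 \<le> h div g" using h1 hg by (metis less_one mult_0_right not_less)
      have "h \<le> h*k" using k by simp
      hence "h < q" using hk by linarith
      hence a2: "h div g < q div g" using hg qg by (metis mult_less_cancel1)
      have "g * ((h div g)*k) < g * (q div g)" using hk hg qg by (metis mult.assoc)
      hence a3: "(h div g)*k < q div g" by simp
      have a4: "q div g \<le> N div g" using qN by (rule div_le_mono)
      have "(g, (h div g, q div g)) \<in> S" using gN a1 a2 a3 a4 cop by (simp add: S_def PP_def)
      moreover have "f (g, (h div g, q div g)) = z" using hg qg z by (simp add: f_def)
      ultimately show "z \<in> f ` S" by force
    qed
  qed
  have "card (QQ N k) = card S" using bij by (simp add: bij_betw_same_card)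
  also have "\<dots> = (\<Sum>e=1..N. card (PP (N div e) k))" unfolding S_def
    by (rule card_SigmaI) (auto simp: PP_finite)
  finally show ?thesis .
qed

lemma QQ_card:
  assumes k: "1 \<le> k"
  shows "card (QQ N k) = (\<Sum>q=1..N. (q - 1) div k)"
proof -
  have eq: "QQ N k = (\<lambda>(q,h). (h,q)) ` Sigma {1..N} (\<lambda>q. {1..(q-1) div k})"
  proof (intro equalityI subsetI)
    fix z assume zq: "z \<in> QQ N k"
    obtain h q where z: "z = (h,q)" by (cases z)
    have h1: "1 \<le> h" and hk: "h*k < q" and qN: "q \<le> N" using zq z by (auto simp: QQ_def)
    have "h*k \<le> q - 1" using hk by simp
    hence "h \<le> (q-1) div k" using k less_eq_div_iff_mult_less_eq[of k h "q-1"] by simp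
    moreover have "1 \<le> q" using hk by simp
    ultimately have "(q,h) \<in> Sigma {1..N} (\<lambda>q. {1..(q-1) div k})" using h1 qN by simp
    thus "z \<in> (\<lambda>(q,h). (h,q)) ` Sigma {1..N} (\<lambda>q. {1..(q-1) div k})" using z by force
  next
    fix z assume "z \<in> (\<lambda>(q,h). (h,q)) ` Sigma {1..N} (\<lambda>q. {1..(q-1) div k})"
    then obtain q h where m: "q \<in> {1..N}" "h \<in> {1..(q-1) div k}" and z: "z = (h,q)" by auto
    have "h*k \<le> q - 1" using m(2) k less_eq_div_iff_mult_less_eq[of k h "q-1"] by simp
    moreover have "1 \<le> q" using m(1) by simp
    ultimately have "h*k < q" by linarith
    thus "z \<in> QQ N k" using m z by (simp add: QQ_def)
  qed
  have inj: "inj_on (\<lambda>(q::nat,h::nat). (h,q)) X" for X by (auto simp: inj_on_def)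
  have "card (QQ N k) = card (Sigma {1..N} (\<lambda>q. {1..(q-1) div k}))"
    unfolding eq by (rule card_image[OF inj])
  also have "\<dots> = (\<Sum>q=1..N. (q - 1) div k)" by simp
  finally show ?thesis .
qed

lemma Suc_div_dvd:
  assumes "0 < (k::nat)"
  shows "Suc m div k = m div k + (if k dvd Suc m then 1 else 0)"
  using div_Suc[of m k] by (auto simp: dvd_eq_mod_eq_0)

lemma totient_L:
  "m \<le> M \<Longrightarrow> 2 * (\<Sum>k=1..M. totient k * (m div k)) = m * (m + 1)"
proof (induction m)
  case 0
  then show ?case by simp
next
  case (Suc m)
  have "(\<Sum>k=1..M. totient k * (Suc m div k)) =
        (\<Sum>k=1..M. totient k * (m div k) + (if k dvd Suc m then totient k else 0))"
    by (rule sum.cong) (auto simp: Suc_div_dvd algebra_simps)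
  also have "\<dots> = (\<Sum>k=1..M. totient k * (m div k)) + (\<Sum>k=1..M. (if k dvd Suc m then totient k else 0))"
    by (simp add: sum.distrib)
  also have "(\<Sum>k=1..M. (if k dvd Suc m then totient k else 0)) = (\<Sum>k\<in>{k\<in>{1..M}. k dvd Suc m}. totient k)"
    by (simp add: sum.inter_filter[symmetric])
  also have "{k\<in>{1..M}. k dvd Suc m} = {d. d dvd Suc m}"
  proof -
    have "x dvd Suc m \<Longrightarrow> 1 \<le> x \<and> x \<le> M" for x
      using Suc.prems dvd_imp_le[of x "Suc m"] by (cases x) auto
    thus ?thesis by auto
  qed
  also have "(\<Sum>d | d dvd Suc m. totient d) = Suc m" by (rule totient_divisor_sum)
  finally show ?case using Suc by (simp add: algebra_simps)
qed


definition TT :: "nat \<Rightarrow> real" where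
  "TT M = (\<Sum>k=1..M. real (totient k) * real (card (PP M k)))"

lemma PP_empty: "M \<le> k \<Longrightarrow> PP M k = {}"
proof -
  assume a: "M \<le> k"
  { fix h q assume "(h,q) \<in> PP M k"
    hence "1 \<le> h" "h*k < q" "q \<le> M" by (auto simp: PP_def)
    moreover have "k \<le> h * k" using \<open>1 \<le> h\<close> by simp
    ultimately have False using a by linarith }
  thus ?thesis by auto
qed

lemma TT_ext:
  assumes "M \<le> N"
  shows "TT M = (\<Sum>k=1..N. real (totient k) * real (card (PP M k)))"
  unfolding TT_def
  by (rule sum.mono_neutral_left) (use assms PP_empty in auto)

lemma nat_ident:
  "2 * (\<Sum>k=1..N. totient k * card (QQ N k)) = (\<Sum>q=1..N. (q - 1) * q)"
proof -
  have "(\<Sum>k=1..N. totient k * card (QQ N k)) = (\<Sum>k=1..N. \<Sum>q=1..N. totient k * ((q - 1) div k))"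
    by (rule sum.cong) (auto simp: QQ_card sum_distrib_left)
  also have "\<dots> = (\<Sum>q=1..N. \<Sum>k=1..N. totient k * ((q - 1) div k))"
    by (rule sum.swap)
  finally have "2 * (\<Sum>k=1..N. totient k * card (QQ N k)) = (\<Sum>q=1..N. 2 * (\<Sum>k=1..N. totient k * ((q - 1) div k)))"
    by (simp add: sum_distrib_left)
  also have "\<dots> = (\<Sum>q=1..N. (q - 1) * q)"
  proof (rule sum.cong)
    fix q assume q: "q \<in> {1..N}"
    have "2 * (\<Sum>k=1..N. totient k * ((q - 1) div k)) = (q - 1) * (q - 1 + 1)"
      using q by (intro totient_L) auto
    moreover have "q - 1 + 1 = q" using q by simp
    ultimately show "2 * (\<Sum>k=1..N. totient k * ((q - 1) div k)) = (q - 1) * q" by metis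
  qed simp
  finally show ?thesis .
qed

lemma real_cubic: "real (\<Sum>q=1..N. (q - 1) * q) = (real N ^ 3 - real N) / 3"
proof (induction N)
  case 0 then show ?case by simp
next
  case (Suc N)
  have "(\<Sum>q=1..Suc N. (q - 1) * q) = (\<Sum>q=1..N. (q - 1) * q) + N * Suc N" by simp
  hence "real (\<Sum>q=1..Suc N. (q - 1) * q) = real (\<Sum>q=1..N. (q - 1) * q) + real N * (real N + 1)"
    by (simp add: algebra_simps)
  also have "\<dots> = (real (Suc N) ^ 3 - real (Suc N)) / 3" using Suc.IH
    by (simp add: power3_eq_cube algebra_simps add_divide_distrib)
  finally show ?case .
qed

lemma main_ident:
  "(\<Sum>e=1..N. TT (N div e)) = (real N ^ 3 - real N) / 6"
proof -
  have "(\<Sum>e=1..N. TT (N div e)) = (\<Sum>e=1..N. \<Sum>k=1..N. real (totient k) * real (card (PP (N div e) k)))"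
    by (rule sum.cong) (rule refl, rule TT_ext, rule div_le_dividend)
  also have "\<dots> = (\<Sum>k=1..N. \<Sum>e=1..N. real (totient k) * real (card (PP (N div e) k)))"
    by (rule sum.swap)
  also have "\<dots> = (\<Sum>k=1..N. real (totient k) * real (card (QQ N k)))"
    by (rule sum.cong) (auto simp: scale sum_distrib_left)
  also have "\<dots> = real (\<Sum>k=1..N. totient k * card (QQ N k))" by simp
  also have "\<dots> = real (\<Sum>q=1..N. (q - 1) * q) / 2"
  proof -
    have "real (2 * (\<Sum>k=1..N. totient k * card (QQ N k))) = real (\<Sum>q=1..N. (q - 1) * q)"
      using nat_ident by (rule arg_cong)
    thus ?thesis by (simp only: of_nat_mult)
  qed
  also have "\<dots> = (real N ^ 3 - real N) / 6" unfolding real_cubic by simp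
  finally show ?thesis .
qed


definition s3 :: "nat \<Rightarrow> real" where
  "s3 n = (\<Sum>e=1..n. 1 / real e ^ 3)"

lemma s3_tail:
  assumes "1 \<le> N" "N \<le> n"
  shows "s3 n \<le> s3 N + 1 / real N - 1 / real n"
  using assms(2)
proof (induction n rule: dec_induct)
  case base then show ?case by simp
next
  case (step n)
  have n1: "real n \<ge> 1" using step.hyps assms(1) by simp
  have "1 / real (Suc n) ^ 3 \<le> 1 / real n - 1 / real (Suc n)"
  proof -
    have "1 / real n - 1 / (real n + 1) = 1 / (real n * (real n + 1))" using n1
      by (simp add: field_simps)
    moreover have "real n * (real n + 1) \<le> (real n + 1) ^ 3"
    proof -
      have "real n * (real n + 1) \<le> (real n + 1) * (real n + 1)" using n1 by (intro mult_right_mono) auto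
      also have "\<dots> \<le> (real n + 1) * (real n + 1) * (real n + 1)" using n1 by simp
      finally show ?thesis by (simp add: power3_eq_cube)
    qed
    moreover have "0 < real n * (real n + 1)" using n1 by simp
    ultimately have "1 / (real n + 1) ^ 3 \<le> 1 / real n - 1 / (real n + 1)"
      using divide_left_mono[of "real n * (real n + 1)" "(real n + 1) ^ 3" 1] by simp
    thus ?thesis by (simp add: add.commute)
  qed
  moreover have "s3 (Suc n) = s3 n + 1 / real (Suc n) ^ 3" by (simp add: s3_def)
  ultimately show ?case using step.IH by simp
qed

lemma s3_mono: "m \<le> n \<Longrightarrow> s3 m \<le> s3 n"
  unfolding s3_def by (rule sum_mono2) auto

lemma s3_bound: "1 \<le> N \<Longrightarrow> s3 n \<le> s3 N + 1 / real N"
proof (cases "n \<le> N")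
  case True
  assume "1 \<le> N"
  have "s3 n \<le> s3 N" using True by (rule s3_mono)
  moreover have "0 \<le> 1 / real N" by simp
  ultimately show ?thesis by linarith
next
  case False
  assume N: "1 \<le> N"
  have "s3 n \<le> s3 N + 1 / real N - 1 / real n" using False N by (intro s3_tail) auto
  moreover have "0 \<le> 1 / real n" by simp
  ultimately show ?thesis by linarith
qed

lemma zeta3_eq: "zeta_real 3 = (\<Sum>i. 1 / real (Suc i) ^ 3)"
  unfolding zeta_real_def by simp

lemma partial_s3: "(\<Sum>i<n. 1 / real (Suc i) ^ 3) = s3 n"
  unfolding s3_def by (simp add: sum.atLeast1_atMost_eq)

lemma summable3: "summable (\<lambda>i. 1 / real (Suc i) ^ 3)"
proof (rule summableI_nonneg_bounded)
  fix n show "(\<Sum>i<n. 1 / real (Suc i) ^ 3) \<le> s3 1 + 1"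
    unfolding partial_s3 using s3_bound[of 1 n] by simp
qed simp

lemma zeta3_bounds:
  assumes "1 \<le> N"
  shows "s3 N \<le> zeta_real 3" "zeta_real 3 \<le> s3 N + 1 / real N"
proof -
  show "s3 N \<le> zeta_real 3" unfolding zeta3_eq partial_s3[symmetric]
    by (rule sum_le_suminf[OF summable3]) auto
  show "zeta_real 3 \<le> s3 N + 1 / real N" unfolding zeta3_eq
    by (rule suminf_le_const[OF summable3]) (unfold partial_s3, rule s3_bound[OF assms])
qed

lemma zeta3_ge1: "zeta_real 3 \<ge> 1"
  using zeta3_bounds(1)[of 1] by (simp add: s3_def)

lemma sq_sum_tail: "2 \<le> n \<Longrightarrow> (\<Sum>e=1..n. 1 / real e ^ 2) \<le> 7/4 - 1 / real n"
proof (induction n rule: dec_induct)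
  case base then show ?case by (simp add: numeral_2_eq_2)
next
  case (step n)
  have n1: "real n \<ge> 1" using step.hyps by simp
  have "1 / real (Suc n) ^ 2 \<le> 1 / real n - 1 / real (Suc n)"
  proof -
    have "1 / real n - 1 / (real n + 1) = 1 / (real n * (real n + 1))" using n1
      by (simp add: field_simps)
    moreover have "real n * (real n + 1) \<le> (real n + 1) ^ 2" using n1
      by (simp add: power2_eq_square)
    moreover have "0 < real n * (real n + 1)" using n1 by simp
    ultimately have "1 / (real n + 1) ^ 2 \<le> 1 / real n - 1 / (real n + 1)"
      using divide_left_mono[of "real n * (real n + 1)" "(real n + 1) ^ 2" 1] by simp
    thus ?thesis by (simp add: add.commute)
  qed
  thus ?case using step.IH by simp
qed

lemma sq_sum: "(\<Sum>e=1..n. 1 / real e ^ 2) \<le> 7/4"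
proof (cases "2 \<le> n")
  case True
  have "0 \<le> 1 / real n" by simp
  thus ?thesis using sq_sum_tail[OF True] by linarith
next
  case False
  hence "n = 0 \<or> n = 1" by auto
  thus ?thesis by auto
qed

lemma sq_sum2: "(\<Sum>e=2..n. 1 / real e ^ 2) \<le> 3/4"
proof (cases "1 \<le> n")
  case True
  have "(\<Sum>e=1..n. 1 / real e ^ 2) = 1 + (\<Sum>e=2..n. 1 / real e ^ 2)"
    using True by (simp add: sum.atLeast_Suc_atMost numeral_2_eq_2)
  thus ?thesis using sq_sum[of n] by simp
next
  case False thus ?thesis by simp
qed

lemma div_real_bounds:
  assumes "e > 0"
  shows "real (N div e) \<le> real N / real e" "real N / real e < real (N div e) + 1"
proof -
  have eq: "real N = real e * real (N div e) + real (N mod e)"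
    by (metis div_mult_mod_eq of_nat_add of_nat_mult mult.commute)
  have "N mod e < e" using assms by simp
  hence m: "real (N mod e) < real e" by simp
  have ep: "real e > 0" using assms by simp
  show "real (N div e) \<le> real N / real e" using eq ep by (simp add: field_simps)
  show "real N / real e < real (N div e) + 1" using eq ep m by (simp add: field_simps)
qed

lemma cube_diff:
  fixes x y :: real
  assumes "0 \<le> y" "y \<le> x" "x < y + 1"
  shows "x ^ 3 - y ^ 3 \<le> 3 * x ^ 2"
proof -
  have "x ^ 3 - y ^ 3 = (x - y) * (x^2 + x*y + y^2)" by (simp add: power2_eq_square power3_eq_cube algebra_simps)
  also have "\<dots> \<le> 1 * (3 * x^2)"
  proof (rule mult_mono)
    show "x - y \<le> 1" using assms by simp
    have "x*y \<le> x^2" using assms by (simp add: power2_eq_square mult_left_mono)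
    moreover have "y^2 \<le> x^2" using assms by (simp add: power_mono)
    ultimately show "x^2 + x*y + y^2 \<le> 3 * x^2" by simp
    show "0 \<le> x^2 + x*y + y^2" using assms by simp
  qed simp
  finally show ?thesis by simp
qed

lemma D_bounds:
  assumes N: "1 \<le> N"
  shows "(\<Sum>e=1..N. real (N div e) ^ 3) \<le> real N ^ 3 * zeta_real 3"
        "real N ^ 3 * zeta_real 3 - 7 * real N ^ 2 \<le> (\<Sum>e=1..N. real (N div e) ^ 3)"
proof -
  have up: "real (N div e) ^ 3 \<le> real N ^ 3 * (1 / real e ^ 3)" if "e \<in> {1..N}" for e
  proof -
    have "real (N div e) ^ 3 \<le> (real N / real e) ^ 3"
      using div_real_bounds(1)[of e N] that by (intro power_mono) auto
    thus ?thesis by (simp add: power_divide)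
  qed
  have lo: "real N ^ 3 * (1 / real e ^ 3) - 3 * (real N ^ 2 * (1 / real e ^ 2)) \<le> real (N div e) ^ 3"
    if "e \<in> {1..N}" for e
  proof -
    have "(real N / real e) ^ 3 - real (N div e) ^ 3 \<le> 3 * (real N / real e) ^ 2"
      using div_real_bounds[of e N] that by (intro cube_diff) auto
    thus ?thesis by (simp add: power_divide)
  qed
  have "(\<Sum>e=1..N. real (N div e) ^ 3) \<le> (\<Sum>e=1..N. real N ^ 3 * (1 / real e ^ 3))"
    by (rule sum_mono) (rule up)
  also have "\<dots> = real N ^ 3 * s3 N" by (simp add: s3_def sum_distrib_left)
  also have "\<dots> \<le> real N ^ 3 * zeta_real 3" using zeta3_bounds(1)[OF N] by (simp add: mult_left_mono)
  finally show "(\<Sum>e=1..N. real (N div e) ^ 3) \<le> real N ^ 3 * zeta_real 3" .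
  have "(\<Sum>e=1..N. real N ^ 3 * (1 / real e ^ 3) - 3 * (real N ^ 2 * (1 / real e ^ 2)))
        \<le> (\<Sum>e=1..N. real (N div e) ^ 3)"
    by (rule sum_mono) (rule lo)
  moreover have "(\<Sum>e=1..N. real N ^ 3 * (1 / real e ^ 3) - 3 * (real N ^ 2 * (1 / real e ^ 2)))
      = real N ^ 3 * s3 N - 3 * (real N ^ 2 * (\<Sum>e=1..N. 1 / real e ^ 2))"
    by (simp add: s3_def sum_subtractf sum_distrib_left)
  moreover have "real N ^ 2 * (\<Sum>e=1..N. 1 / real e ^ 2) \<le> 7/4 * real N ^ 2"
    using mult_left_mono[OF sq_sum[of N], of "real N ^ 2"] by (simp add: mult.commute)
  moreover have "real N ^ 3 * zeta_real 3 \<le> real N ^ 3 * s3 N + real N ^ 2"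
  proof -
    have "real N ^ 3 * zeta_real 3 \<le> real N ^ 3 * (s3 N + 1 / real N)"
      using zeta3_bounds(2)[OF N] by (simp add: mult_left_mono)
    also have "\<dots> = real N ^ 3 * s3 N + real N ^ 2" using N
      by (simp add: algebra_simps power2_eq_square power3_eq_cube)
    finally show ?thesis .
  qed
  moreover have "0 \<le> real N ^ 2" by simp
  ultimately show "real N ^ 3 * zeta_real 3 - 7 * real N ^ 2 \<le> (\<Sum>e=1..N. real (N div e) ^ 3)"
    by linarith
qed


lemma lin_help: fixes X n2 n3 n :: real
  assumes "X \<le> n3 / 6" "n3 / 6 - 7 * n2 / 6 \<le> X" "n \<le> n2" "0 \<le> n"
  shows "(n3 - n)/6 - X \<le> 2 * n2" "- ((n3 - n)/6 - X) \<le> 2 * n2"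
  using assms by (simp_all add: field_simps)

definition EE :: "nat \<Rightarrow> real" where
  "EE n = TT n - real n ^ 3 / (6 * zeta_real 3)"

lemma sumE:
  assumes N: "1 \<le> N"
  shows "\<bar>\<Sum>e=1..N. EE (N div e)\<bar> \<le> 2 * real N ^ 2"
proof -
  define z where "z = zeta_real 3"
  have z1: "z \<ge> 1" using zeta3_ge1 by (simp add: z_def)
  define D where "D = (\<Sum>e=1..N. real (N div e) ^ 3)"
  have D1: "D \<le> real N ^ 3 * z" and D2: "real N ^ 3 * z - 7 * real N ^ 2 \<le> D"
    using D_bounds[OF N] by (simp_all add: D_def z_def)
  have "(\<Sum>e=1..N. EE (N div e)) = (\<Sum>e=1..N. TT (N div e)) - (\<Sum>e=1..N. real (N div e) ^ 3 / (6 * z))"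
    by (simp add: EE_def sum_subtractf z_def)
  also have "(\<Sum>e=1..N. real (N div e) ^ 3 / (6 * z)) = D / (6 * z)"
    by (simp add: D_def sum_divide_distrib)
  finally have eq: "(\<Sum>e=1..N. EE (N div e)) = (real N ^ 3 - real N) / 6 - D / (6 * z)"
    by (simp only: main_ident)
  have zp: "6 * z > 0" using z1 by simp
  have u: "D / (6 * z) \<le> real N ^ 3 / 6"
  proof -
    have "D / (6 * z) \<le> (real N ^ 3 * z) / (6 * z)" using D1 zp by (intro divide_right_mono) auto
    also have "\<dots> = real N ^ 3 / 6" using z1 by simp
    finally show ?thesis .
  qed
  have l: "real N ^ 3 / 6 - 7 * real N ^ 2 / 6 \<le> D / (6 * z)"
  proof -
    have "(real N ^ 3 * z - 7 * real N ^ 2) / (6 * z) \<le> D / (6 * z)" using D2 zp by (intro divide_right_mono) auto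
    moreover have "(real N ^ 3 * z - 7 * real N ^ 2) / (6 * z) = real N ^ 3 / 6 - 7 * real N ^ 2 / (6 * z)"
      using z1 by (simp add: field_simps)
    moreover have "7 * real N ^ 2 / (6 * z) \<le> 7 * real N ^ 2 / 6"
      using z1 by (intro divide_left_mono) auto
    ultimately show ?thesis by linarith
  qed
  have h1: "real N \<le> real N ^ 2" using N by (simp add: power2_eq_square)
  have h2: "0 \<le> real N" by simp
  note c = lin_help[OF u l h1 h2]
  show ?thesis unfolding eq abs_le_iff using c by blast
qed

lemma Ebound: "\<bar>EE n\<bar> \<le> 8 * real n ^ 2"
proof (induction n rule: less_induct)
  case (less n)
  show ?case
  proof (cases "n = 0")
    case True
    thus ?thesis by (simp add: EE_def TT_def)
  next
    case False
    hence n1: "1 \<le> n" by simp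
    have split: "(\<Sum>e=1..n. EE (n div e)) = EE n + (\<Sum>e=2..n. EE (n div e))"
      using n1 by (simp add: sum.atLeast_Suc_atMost numeral_2_eq_2)
    have b: "\<bar>EE (n div e)\<bar> \<le> 8 * real n ^ 2 * (1 / real e ^ 2)" if e: "e \<in> {2..n}" for e
    proof -
      have "n div e < n" using e n1 by simp
      hence "\<bar>EE (n div e)\<bar> \<le> 8 * real (n div e) ^ 2" by (rule less.IH)
      also have "\<dots> \<le> 8 * (real n / real e) ^ 2"
        using div_real_bounds(1)[of e n] e by (intro mult_left_mono power_mono) auto
      also have "\<dots> = 8 * real n ^ 2 * (1 / real e ^ 2)" by (simp add: power_divide)
      finally show ?thesis .
    qed
    have "\<bar>\<Sum>e=2..n. EE (n div e)\<bar> \<le> (\<Sum>e=2..n. \<bar>EE (n div e)\<bar>)" by (rule sum_abs)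
    also have "\<dots> \<le> (\<Sum>e=2..n. 8 * real n ^ 2 * (1 / real e ^ 2))" by (rule sum_mono) (rule b)
    also have "\<dots> = 8 * real n ^ 2 * (\<Sum>e=2..n. 1 / real e ^ 2)" by (simp add: sum_distrib_left)
    also have "\<dots> \<le> 8 * real n ^ 2 * (3/4)" using sq_sum2[of n] by (intro mult_left_mono) auto
    finally have t: "\<bar>\<Sum>e=2..n. EE (n div e)\<bar> \<le> 6 * real n ^ 2" by simp
    have "\<bar>\<Sum>e=1..n. EE (n div e)\<bar> \<le> 2 * real n ^ 2" using sumE[OF n1] .
    thus ?thesis using t split by linarith
  qed
qed

theorem theorem4:
  shows "\<exists>C::real. \<forall>N::nat. N \<ge> 2 \<longrightarrow>
    \<bar>(\<Sum>k=1..N. real (totient k) * real (farey_index N (1 / of_nat k)))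
       - real N ^ 3 / (6 * zeta_real 3)\<bar> \<le> C * real N ^ 3 / ln (real N)"
proof (intro exI allI impI)
  fix N :: nat assume N2: "N \<ge> 2"
  hence N1: "1 \<le> N" by simp
  have "(\<Sum>k=1..N. real (totient k) * real (farey_index N (1 / of_nat k)))
      = (\<Sum>k=1..N. real (totient k) * real (card (PP N k)) + 2 * real (totient k))"
  proof (rule sum.cong)
    fix k assume k: "k \<in> {1..N}"
    have "farey_index N (1 / of_nat k) = card (PP N k) + 2"
      unfolding farey_index_def using farey_card[of k N] k N1 by simp
    thus "real (totient k) * real (farey_index N (1 / of_nat k)) = real (totient k) * real (card (PP N k)) + 2 * real (totient k)"
      by (simp add: algebra_simps)
  qed simp
  also have "\<dots> = TT N + 2 * (\<Sum>k=1..N. real (totient k))"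
    by (simp add: TT_def sum.distrib sum_distrib_left)
  finally have eq: "(\<Sum>k=1..N. real (totient k) * real (farey_index N (1 / of_nat k)))
      = TT N + 2 * (\<Sum>k=1..N. real (totient k))" .
  have "(\<Sum>k=1..N. real (totient k)) \<le> (\<Sum>k=1..N. real N)"
    by (rule sum_mono) (use totient_le order_trans in \<open>auto\<close>)
  hence ph: "(\<Sum>k=1..N. real (totient k)) \<le> real N ^ 2" by (simp add: power2_eq_square)
  have ph0: "0 \<le> (\<Sum>k=1..N. real (totient k))" by (rule sum_nonneg) simp
  have "\<bar>(\<Sum>k=1..N. real (totient k) * real (farey_index N (1 / of_nat k))) - real N ^ 3 / (6 * zeta_real 3)\<bar>
        = \<bar>EE N + 2 * (\<Sum>k=1..N. real (totient k))\<bar>" unfolding eq EE_def by simp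
  also have "\<dots> \<le> 10 * real N ^ 2" using Ebound[of N] ph ph0 by (simp add: abs_le_iff) 
  also have "\<dots> \<le> 10 * real N ^ 3 / ln (real N)"
  proof -
    have lp: "0 < ln (real N)" using N2 by simp
    have lN: "ln (real N) \<le> real N" using ln_le_minus_one[of "real N"] N2 by simp
    have "10 * real N ^ 2 = 10 * real N ^ 3 / real N" using N2 by (simp add: power2_eq_square power3_eq_cube)
    also have "\<dots> \<le> 10 * real N ^ 3 / ln (real N)" using lp lN by (intro divide_left_mono) auto
    finally show ?thesis .
  qed
  finally show "\<bar>(\<Sum>k=1..N. real (totient k) * real (farey_index N (1 / of_nat k))) - real N ^ 3 / (6 * zeta_real 3)\<bar>
        \<le> 10 * real N ^ 3 / ln (real N)" .
qed

end
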